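(* Let $d\ge1$, $p\in(0,1)$, $q:=1-p$. Let $f_X$ and $f_Y$ be probability densities on $\mathbb{R}^d$ with the same bounded support, bounded below by $C_L>0$ and above by $C_U<\infty$ on the support, and H\"older continuous with parameter $\gamma\in(0,1]$. Let $X=\{X_1,\dots,X_N\}$ be i.i.d. with density $f_X$ and $Y=\{Y_1,\dots,Y_M\}$ be i.i.d. with density $f_Y$ (independent of $X$), where $M=\lfloor Nq/p\rfloor$. Let $\widehat{D_p}(X,Y)=1-|\mathcal{E}(X,Y)|\frac{N+M}{2NM}$, where $|\mathcal{E}(X,Y)|$ is the number of points $Z_i$ of $Z=X\cup Y$ whose $k$-th nearest neighbor in $Z$ belongs to the other sample. Then $$\mathrm{Var}\big[\widehat{D_p}(X,Y)\big]\le O\!\left(\frac1N\right).$$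
   Context: $\widehat{D_p}$ is the $k$-nearest-neighbor (Friedman–Rafsky type) estimator of the Henze–Penrose divergence $D_p=1-\int \frac{f_X f_Y}{pf_X+qf_Y}\,dx$: in the $k$-NN graph on $Z$ each point is joined to its $k$-th nearest neighbor, and $\mathcal{E}(X,Y)$ is the set of edges joining a point of $X$ to a point of $Y$. Variance is $\mathbb{E}[\hat T^2]-\mathbb{E}[\hat T]^2$. *)

theory Defs
  imports "HOL-Probability.Probability" "HOL-Library.Landau_Symbols"
begin

definition closer :: "(nat \<Rightarrow> 'a::metric_space) \<Rightarrow> nat \<Rightarrow> nat \<Rightarrow> nat \<Rightarrow> bool" where
  "closer z i l j \<longleftrightarrow> dist (z i) (z l) < dist (z i) (z j)
      \<or> (dist (z i) (z l) = dist (z i) (z j) \<and> l < j)"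

definition is_kth_nn :: "(nat \<Rightarrow> 'a::metric_space) \<Rightarrow> nat \<Rightarrow> nat \<Rightarrow> nat \<Rightarrow> nat \<Rightarrow> bool" where
  "is_kth_nn z n k i j \<longleftrightarrow> j < n \<and> j \<noteq> i \<and>
      card {l. l < n \<and> l \<noteq> i \<and> closer z i l j} = k - 1"

definition pooled :: "nat \<Rightarrow> (nat \<Rightarrow> 'a) \<Rightarrow> (nat \<Rightarrow> 'a) \<Rightarrow> nat \<Rightarrow> 'a" where
  "pooled N xs ys = (\<lambda>i. if i < N then xs i else ys (i - N))"

definition cross_count :: "nat \<Rightarrow> nat \<Rightarrow> nat \<Rightarrow> (nat \<Rightarrow> 'a::metric_space) \<Rightarrow> (nat \<Rightarrow> 'a) \<Rightarrow> nat" where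
  "cross_count k N M xs ys =
     card {i. i < N + M \<and> (\<exists>j. is_kth_nn (pooled N xs ys) (N + M) k i j \<and> ((i < N) \<noteq> (j < N)))}"

definition Dp_hat :: "nat \<Rightarrow> nat \<Rightarrow> nat \<Rightarrow> (nat \<Rightarrow> 'a::metric_space) \<Rightarrow> (nat \<Rightarrow> 'a) \<Rightarrow> real" where
  "Dp_hat k N M xs ys = 1 - real (cross_count k N M xs ys) * real (N + M) / (2 * real N * real M)"

definition sample_measure ::
  "nat \<Rightarrow> nat \<Rightarrow> ('a::euclidean_space \<Rightarrow> real) \<Rightarrow> ('a \<Rightarrow> real) \<Rightarrow> ((nat \<Rightarrow> 'a) \<times> (nat \<Rightarrow> 'a)) measure" where
  "sample_measure N M fX fY =
     (PiM {..<N} (\<lambda>_. density lborel (\<lambda>x. ennreal (fX x))))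
       \<Otimes>\<^sub>M (PiM {..<M} (\<lambda>_. density lborel (\<lambda>x. ennreal (fY x))))"

definition variance_under :: "'b measure \<Rightarrow> ('b \<Rightarrow> real) \<Rightarrow> real" where
  "variance_under P T = (\<integral>\<omega>. (T \<omega>)\<^sup>2 \<partial>P) - (\<integral>\<omega>. T \<omega> \<partial>P)\<^sup>2"

definition prob_density :: "('a::euclidean_space \<Rightarrow> real) \<Rightarrow> bool" where
  "prob_density f \<longleftrightarrow> f \<in> borel_measurable lborel \<and> (\<forall>x. 0 \<le> f x)
      \<and> (\<integral>\<^sup>+ x. ennreal (f x) \<partial>lborel) = 1"

end

theory Submission
  imports Defs
begin


lemma AE_PiM_insert_iff:
  fixes M :: "'i \<Rightarrow> 'b measure"
  assumes MP: "\<And>i. prob_space (M i)" and fin: "finite J" and iJ: "i \<notin> J"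
  and Q: "{\<omega> \<in> space (PiM (insert i J) M). Q \<omega>} \<in> sets (PiM (insert i J) M)"
  shows "(AE \<omega> in PiM (insert i J) M. Q \<omega>) \<longleftrightarrow> (AE x in PiM J M. AE y in M i. Q (x(i:=y)))"
proof -
  interpret product_prob_space M UNIV by (simp add: product_prob_space_def product_prob_space_axioms_def MP product_sigma_finite_def prob_space_imp_sigma_finite)
  define A where "A = {\<omega> \<in> space (PiM (insert i J) M). \<not> Q \<omega>}"
  have A[measurable]: "A \<in> sets (PiM (insert i J) M)" unfolding A_def using Q by auto
  have "(AE \<omega> in PiM (insert i J) M. Q \<omega>) \<longleftrightarrow> emeasure (PiM (insert i J) M) A = 0"
    unfolding A_def by (rule AE_iff_measurable[OF _ refl]) (use A A_def in auto)
  also have "emeasure (PiM (insert i J) M) A = (\<integral>\<^sup>+ \<omega>. indicator A \<omega> \<partial>PiM (insert i J) M)"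
    by simp
  also have "\<dots> = (\<integral>\<^sup>+ x. (\<integral>\<^sup>+ y. indicator A (x(i := y)) \<partial>(M i)) \<partial>(PiM J M))"
    by (rule product_nn_integral_insert) (use fin iJ in auto)
  also have "\<dots> = 0 \<longleftrightarrow> (AE x in PiM J M. (\<integral>\<^sup>+ y. indicator A (x(i := y)) \<partial>(M i)) = 0)"
    by (rule nn_integral_0_iff_AE) measurable
  also have "\<dots> \<longleftrightarrow> (AE x in PiM J M. AE y in M i. Q (x(i:=y)))"
  proof (rule AE_cong)
    fix x assume x: "x \<in> space (PiM J M)"
    have m: "(\<lambda>y. indicator A (x(i := y)) :: ennreal) \<in> borel_measurable (M i)"
      using measurable_comp[OF measurable_component_update[OF x iJ] borel_measurable_indicator[OF A]]
      by (simp add: comp_def)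
    have "(\<integral>\<^sup>+ y. indicator A (x(i := y)) \<partial>(M i)) = 0 \<longleftrightarrow> (AE y in M i. indicator A (x(i := y)) = (0::ennreal))"
      by (rule nn_integral_0_iff_AE[OF m])
    also have "\<dots> \<longleftrightarrow> (AE y in M i. Q (x(i:=y)))"
    proof (rule AE_cong)
      fix y assume y: "y \<in> space (M i)"
      have "x(i:=y) \<in> space (PiM (insert i J) M)"
        using x y by (auto simp: space_PiM PiE_iff extensional_def)
      then show "(indicator A (x(i := y)) = (0::ennreal)) = Q (x(i := y))"
        by (auto simp: A_def indicator_def)
    qed
    finally show "((\<integral>\<^sup>+ y. indicator A (x(i := y)) \<partial>(M i)) = 0) = (AE y in M i. Q (x(i := y)))" .
  qed
  finally show ?thesis .
qed

lemma bnd_integrable: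
  fixes f :: "'a \<Rightarrow> real"
  assumes "prob_space M" "f \<in> borel_measurable M" "\<And>x. x \<in> space M \<Longrightarrow> \<bar>f x\<bar> \<le> B"
  shows "integrable M f"
proof -
  interpret prob_space M by fact
  show ?thesis
    by (rule integrable_const_bound[where B=B]) (use assms in auto)
qed

lemma integral_le_AE_const:
  fixes f :: "'a \<Rightarrow> real"
  assumes "prob_space M" "integrable M f" "AE x in M. f x \<le> a"
  shows "integral\<^sup>L M f \<le> a"
proof -
  interpret prob_space M by fact
  have "integral\<^sup>L M f \<le> integral\<^sup>L M (\<lambda>_. a)"
    by (rule integral_mono_AE) (use assms in auto)
  also have "\<dots> = a" using prob_space by simp
  finally show ?thesis .
qed

lemma abs_integral_le_AE_const:
  fixes f :: "'a \<Rightarrow> real"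
  assumes "prob_space M" "integrable M f" "AE x in M. \<bar>f x\<bar> \<le> a"
  shows "\<bar>integral\<^sup>L M f\<bar> \<le> a"
proof -
  have "\<bar>integral\<^sup>L M f\<bar> \<le> integral\<^sup>L M (\<lambda>x. \<bar>f x\<bar>)" by (rule integral_abs_bound)
  also have "\<dots> \<le> a" by (rule integral_le_AE_const) (use assms in auto)
  finally show ?thesis .
qed

lemma var_shift:
  fixes f :: "'a \<Rightarrow> real"
  assumes P: "prob_space M" and fm: "f \<in> borel_measurable M" and b: "\<And>x. x \<in> space M \<Longrightarrow> \<bar>f x\<bar> \<le> B"
  shows "variance_under M f = integral\<^sup>L M (\<lambda>x. (f x - a)^2) - (integral\<^sup>L M f - a)^2"
proof -
  interpret prob_space M by fact
  have i1: "integrable M f" by (rule bnd_integrable[OF P fm b])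
  have i2: "integrable M (\<lambda>x. (f x)^2)"
  proof (rule bnd_integrable[OF P _ , where B="B^2"])
    show "(\<lambda>x. (f x)\<^sup>2) \<in> borel_measurable M" using fm by measurable
    fix x assume x: "x \<in> space M"
    have "\<bar>f x\<bar>^2 \<le> B^2" using b[OF x] by (intro power_mono) auto
    then show "\<bar>(f x)\<^sup>2\<bar> \<le> B\<^sup>2" by simp
  qed
  have "integral\<^sup>L M (\<lambda>x. (f x - a)^2) = integral\<^sup>L M (\<lambda>x. (f x)^2 - 2 * a * f x + a^2)"
    by (simp add: power2_diff algebra_simps)
  also have "\<dots> = integral\<^sup>L M (\<lambda>x. (f x)^2) - 2 * a * integral\<^sup>L M f + a^2"
    using i1 i2 prob_space by (simp add: integral_diff integral_add)
  finally show ?thesis unfolding variance_under_def by (simp add: power2_diff)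
qed

lemma var_le:
  fixes f :: "'a \<Rightarrow> real"
  assumes P: "prob_space M" and fm: "f \<in> borel_measurable M" and b: "\<And>x. x \<in> space M \<Longrightarrow> \<bar>f x\<bar> \<le> B"
  shows "variance_under M f \<le> integral\<^sup>L M (\<lambda>x. (f x - a)^2)"
  using var_shift[OF assms, of a] by simp

lemma var_nonneg:
  fixes f :: "'a \<Rightarrow> real"
  assumes P: "prob_space M" and fm: "f \<in> borel_measurable M" and b: "\<And>x. x \<in> space M \<Longrightarrow> \<bar>f x\<bar> \<le> B"
  shows "0 \<le> variance_under M f"
  using var_shift[OF assms, of "integral\<^sup>L M f"] by simp

lemma prob_AE_ex:
  assumes "prob_space M" "AE x in M. Q x"
  shows "\<exists>x\<in>space M. Q x"
proof (rule ccontr)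
  interpret prob_space M by fact
  assume "\<not> ?thesis"
  then have "AE x in M. False" using assms(2) by (rule_tac AE_mp[OF assms(2) AE_I2]) auto
  then show False by (simp add: AE_False)
qed

lemma measurable_upd_const:
  assumes "i \<in> I" "y0 \<in> space (M i)"
  shows "(\<lambda>w. w(i:=y0)) \<in> measurable (PiM I M) (PiM I M)"
  by (rule measurable_fun_upd[where J=I]) (use assms in auto)

lemma ES:
  fixes M :: "'i \<Rightarrow> 'b measure" and f :: "('i \<Rightarrow> 'b) \<Rightarrow> real"
  assumes MP: "\<And>i. prob_space (M i)" and fin: "finite I"
  and f: "f \<in> borel_measurable (PiM I M)"
  and bnd: "\<And>w. w \<in> space (PiM I M) \<Longrightarrow> \<bar>f w\<bar> \<le> B"
  and H: "\<And>i. i \<in> I \<Longrightarrow> AE y in M i. AE w in PiM I M. \<bar>f w - f (w(i:=y))\<bar> \<le> c"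
  shows "variance_under (PiM I M) f \<le> real (card I) * c^2"
using fin f bnd H proof (induction I arbitrary: f B rule: finite_induct)
  case empty
  show ?case by (simp add: PiM_empty variance_under_def lebesgue_integral_count_space_finite)
next
  case (insert i J)
  interpret product_prob_space M UNIV
    by (simp add: product_prob_space_def product_prob_space_axioms_def MP product_sigma_finite_def prob_space_imp_sigma_finite)
  let ?P = "PiM (insert i J) M" and ?PJ = "PiM J M"
  have PP: "prob_space ?P" and PJ: "prob_space ?PJ" by (auto intro!: prob_space_PiM MP)
  interpret PJ: prob_space ?PJ by (rule PJ)
  interpret Mi: prob_space "M i" by (rule MP)
  note fm[measurable] = insert.prems(1)
  have Fm[measurable]: "(\<lambda>(x,y). f (x(i:=y))) \<in> borel_measurable (?PJ \<Otimes>\<^sub>M M i)"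
    by measurable
  have Fx[measurable]: "(\<lambda>y. f (x(i:=y))) \<in> borel_measurable (M i)" if "x \<in> space ?PJ" for x
    using measurable_comp[OF measurable_component_update[OF that insert.hyps(2)] fm] by (simp add: comp_def)
  have spx: "x(i:=y) \<in> space ?P" if "x \<in> space ?PJ" "y \<in> space (M i)" for x y
    using that by (auto simp: space_PiM PiE_iff extensional_def)
  have Fb: "\<bar>f (x(i:=y))\<bar> \<le> B" if "x \<in> space ?PJ" "y \<in> space (M i)" for x y
    using insert.prems(2)[OF spx[OF that]] .
  define g where "g x = (\<integral>y. f (x(i:=y)) \<partial>M i)" for x
  define h where "h x = (\<integral>y. (f (x(i:=y)))^2 \<partial>M i)" for x
  have gm[measurable]: "g \<in> borel_measurable ?PJ" unfolding g_def by measurable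
  have hm[measurable]: "h \<in> borel_measurable ?PJ" unfolding h_def by measurable
  have gb: "\<bar>g x\<bar> \<le> B" if "x \<in> space ?PJ" for x
    unfolding g_def by (rule abs_integral_le_AE_const[OF MP bnd_integrable[OF MP Fx[OF that] Fb[OF that]]])
      (use Fb[OF that] in auto)
  have B0: "0 \<le> B"
  proof -
    obtain x where "x \<in> space ?PJ" using PJ.not_empty by blast
    from gb[OF this] show ?thesis by linarith
  qed
  have F2b: "\<bar>(f (x(i:=y)))^2\<bar> \<le> B^2" if "x \<in> space ?PJ" "y \<in> space (M i)" for x y
    using Fb[OF that] by (simp add: abs_le_square_iff[symmetric] B0)
  have hb: "\<bar>h x\<bar> \<le> B^2" if "x \<in> space ?PJ" for x
    unfolding h_def by (rule abs_integral_le_AE_const[OF MP bnd_integrable[OF MP _ F2b[OF that]]])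
      (use F2b[OF that] Fx[OF that] in auto)
  have g2b: "\<bar>(g x)^2\<bar> \<le> B^2" if "x \<in> space ?PJ" for x
    using gb[OF that] by (simp add: abs_le_square_iff[symmetric] B0)
  have fb2: "\<bar>(f w)^2\<bar> \<le> B^2" if "w \<in> space ?P" for w
    using insert.prems(2)[OF that] by (simp add: abs_le_square_iff[symmetric] B0)
  have E1: "integral\<^sup>L ?P f = integral\<^sup>L ?PJ g"
    unfolding g_def
    by (rule product_integral_insert) (use insert.hyps in \<open>auto intro!: bnd_integrable[OF PP fm insert.prems(2)]\<close>)
  have E2: "integral\<^sup>L ?P (\<lambda>w. (f w)^2) = integral\<^sup>L ?PJ h"
    unfolding h_def
    by (rule product_integral_insert) (use insert.hyps in \<open>auto intro!: bnd_integrable[OF PP _ fb2]\<close>)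
  have ih: "integrable ?PJ h" by (rule bnd_integrable[OF PJ hm hb])
  have ig2: "integrable ?PJ (\<lambda>x. (g x)^2)" by (rule bnd_integrable[OF PJ _ g2b]) measurable
  have dec: "variance_under ?P f = integral\<^sup>L ?PJ (\<lambda>x. h x - (g x)^2) + variance_under ?PJ g"
    unfolding variance_under_def E1 E2 using ih ig2 by (simp add: integral_diff)
  have "i \<in> insert i J" by simp
  from prob_AE_ex[OF MP insert.prems(3)[OF this]] obtain y0 where
    y0: "y0 \<in> space (M i)" and ae0: "AE w in ?P. \<bar>f w - f (w(i:=y0))\<bar> \<le> c" by blast
  have um[measurable]: "(\<lambda>w. w(i:=y0)) \<in> measurable ?P ?P"
    by (rule measurable_upd_const) (use y0 in auto)
  have "AE x in ?PJ. AE y in M i. \<bar>f (x(i:=y)) - f ((x(i:=y))(i:=y0))\<bar> \<le> c"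
    using ae0 by (subst (asm) AE_PiM_insert_iff[OF MP insert.hyps]) measurable
  then have ae1: "AE x in ?PJ. h x - (g x)^2 \<le> c^2"
  proof (rule AE_mp[OF _ AE_I2], intro impI)
    fix x assume x: "x \<in> space ?PJ" and ae: "AE y in M i. \<bar>f (x(i:=y)) - f ((x(i:=y))(i:=y0))\<bar> \<le> c"
    have "h x - (g x)^2 = variance_under (M i) (\<lambda>y. f (x(i:=y)))"
      unfolding variance_under_def h_def g_def ..
    also have "\<dots> \<le> (\<integral>y. (f (x(i:=y)) - f (x(i:=y0)))^2 \<partial>M i)"
      by (rule var_le[OF MP Fx[OF x] Fb[OF x]])
    also have "\<dots> \<le> c^2"
    proof (rule integral_le_AE_const[OF MP])
      show "integrable (M i) (\<lambda>y. (f (x(i := y)) - f (x(i := y0)))\<^sup>2)"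
      proof (rule bnd_integrable[OF MP, where B="(2*B)^2"])
        show "(\<lambda>y. (f (x(i := y)) - f (x(i := y0)))\<^sup>2) \<in> borel_measurable (M i)"
          using Fx[OF x] by measurable
        fix y assume y: "y \<in> space (M i)"
        have a: "\<bar>f (x(i := y)) - f (x(i := y0))\<bar> \<le> 2*B"
          using Fb[OF x y] Fb[OF x y0] by linarith
        have "\<bar>f (x(i := y)) - f (x(i := y0))\<bar>^2 \<le> (2*B)^2"
          by (rule power_mono[OF a]) simp
        then show "\<bar>(f (x(i := y)) - f (x(i := y0)))\<^sup>2\<bar> \<le> (2 * B)\<^sup>2" by simp
      qed
      show "AE y in M i. (f (x(i := y)) - f (x(i := y0)))\<^sup>2 \<le> c\<^sup>2"
        using ae
      proof eventually_elim
        fix y assume a: "\<bar>f (x(i:=y)) - f ((x(i:=y))(i:=y0))\<bar> \<le> c"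
        then have a': "\<bar>f (x(i:=y)) - f (x(i:=y0))\<bar> \<le> c" by simp
        have "\<bar>f (x(i := y)) - f (x(i := y0))\<bar>^2 \<le> c^2"
          by (rule power_mono[OF a']) simp
        then show "(f (x(i := y)) - f (x(i := y0)))\<^sup>2 \<le> c\<^sup>2" by simp
      qed
    qed
    finally show "h x - (g x)^2 \<le> c^2" .
  qed
  have T1: "integral\<^sup>L ?PJ (\<lambda>x. h x - (g x)^2) \<le> c^2"
    by (rule integral_le_AE_const[OF PJ _ ae1]) (use ih ig2 in auto)
  have HJ: "AE y in M j. AE x in ?PJ. \<bar>g x - g (x(j:=y))\<bar> \<le> c" if j: "j \<in> J" for j
  proof -
    have ij: "i \<noteq> j" using j insert.hyps by auto
    have "j \<in> insert i J" using j by simp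
    from insert.prems(3)[OF this] show ?thesis
    proof (rule AE_mp[OF _ AE_I2], intro impI)
      fix y assume y: "y \<in> space (M j)" and ae: "AE w in ?P. \<bar>f w - f (w(j:=y))\<bar> \<le> c"
      have um[measurable]: "(\<lambda>w. w(j:=y)) \<in> measurable ?P ?P"
        by (rule measurable_upd_const) (use y j in auto)
      have "AE x in ?PJ. AE z in M i. \<bar>f (x(i:=z)) - f ((x(i:=z))(j:=y))\<bar> \<le> c"
        using ae by (subst (asm) AE_PiM_insert_iff[OF MP insert.hyps]) measurable
      then show "AE x in ?PJ. \<bar>g x - g (x(j:=y))\<bar> \<le> c"
      proof (rule AE_mp[OF _ AE_I2], intro impI)
        fix x assume x: "x \<in> space ?PJ" and ae: "AE z in M i. \<bar>f (x(i:=z)) - f ((x(i:=z))(j:=y))\<bar> \<le> c"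
        have x': "x(j:=y) \<in> space ?PJ" using x y j by (auto simp: space_PiM PiE_iff extensional_def)
        have "g x - g (x(j:=y)) = (\<integral>z. f (x(i:=z)) - f ((x(j:=y))(i:=z)) \<partial>M i)"
          unfolding g_def
          by (subst Bochner_Integration.integral_diff) (auto intro!: bnd_integrable[OF MP Fx Fb] x x')
        also have "\<bar>\<dots>\<bar> \<le> c"
        proof (rule abs_integral_le_AE_const[OF MP])
          show "integrable (M i) (\<lambda>z. f (x(i := z)) - f (x(j := y, i := z)))"
            by (auto intro!: bnd_integrable[OF MP Fx Fb] x x')
          show "AE z in M i. \<bar>f (x(i := z)) - f (x(j := y, i := z))\<bar> \<le> c"
            using ae by eventually_elim (simp add: fun_upd_twist[OF ij])
        qed
        finally show "\<bar>g x - g (x(j:=y))\<bar> \<le> c" .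
      qed
    qed
  qed
  have T2: "variance_under ?PJ g \<le> real (card J) * c^2"
    by (rule insert.IH[OF gm gb HJ])
  show ?case using dec T1 T2 insert.hyps by (simp add: algebra_simps)
qed

lemma ES2:
  fixes MA :: "'i \<Rightarrow> 'b measure" and MB :: "'j \<Rightarrow> 'c measure"
    and f :: "('i \<Rightarrow> 'b) \<times> ('j \<Rightarrow> 'c) \<Rightarrow> real"
  assumes MA: "\<And>i. prob_space (MA i)" and MB: "\<And>j. prob_space (MB j)"
  and fI: "finite I" and fJ: "finite J"
  and f[measurable]: "f \<in> borel_measurable (PiM I MA \<Otimes>\<^sub>M PiM J MB)"
  and bnd: "\<And>w. w \<in> space (PiM I MA \<Otimes>\<^sub>M PiM J MB) \<Longrightarrow> \<bar>f w\<bar> \<le> Bd"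
  and HX: "\<And>a. a \<in> I \<Longrightarrow> AE w in MA a. AE x in PiM I MA. AE y in PiM J MB. \<bar>f (x,y) - f (x(a:=w),y)\<bar> \<le> c"
  and HY: "\<And>b x. b \<in> J \<Longrightarrow> x \<in> space (PiM I MA) \<Longrightarrow> AE w in MB b. AE y in PiM J MB. \<bar>f (x,y) - f (x,y(b:=w))\<bar> \<le> c"
  shows "variance_under (PiM I MA \<Otimes>\<^sub>M PiM J MB) f \<le> (real (card I) + real (card J)) * c^2"
proof -
  let ?A = "PiM I MA" and ?B = "PiM J MB"
  have PA: "prob_space ?A" and PB: "prob_space ?B" by (auto intro!: prob_space_PiM MA MB)
  interpret A: prob_space ?A by (rule PA)
  interpret B: prob_space ?B by (rule PB)
  interpret AB: pair_prob_space ?A ?B ..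
  have PAB: "prob_space (?A \<Otimes>\<^sub>M ?B)" by (rule AB.prob_space_axioms)
  have fx[measurable]: "(\<lambda>y. f (x,y)) \<in> borel_measurable ?B" if "x \<in> space ?A" for x
    using that by measurable
  have fxb: "\<bar>f (x,y)\<bar> \<le> Bd" if "x \<in> space ?A" "y \<in> space ?B" for x y
    using bnd that by (simp add: space_pair_measure)
  have B0: "0 \<le> Bd"
  proof -
    obtain x where "x \<in> space ?A" using A.not_empty by blast
    moreover obtain y where "y \<in> space ?B" using B.not_empty by blast
    ultimately show ?thesis using fxb by force
  qed
  have f2b: "\<bar>(f w)^2\<bar> \<le> Bd^2" if "w \<in> space (?A \<Otimes>\<^sub>M ?B)" for w
    using bnd[OF that] by (simp add: abs_le_square_iff[symmetric] B0)
  define g where "g x = (\<integral>y. f (x,y) \<partial>?B)" for x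
  define h where "h x = (\<integral>y. (f (x,y))^2 \<partial>?B)" for x
  have gm[measurable]: "g \<in> borel_measurable ?A" unfolding g_def by measurable
  have hm[measurable]: "h \<in> borel_measurable ?A" unfolding h_def by measurable
  have gb: "\<bar>g x\<bar> \<le> Bd" if "x \<in> space ?A" for x
    unfolding g_def by (rule abs_integral_le_AE_const[OF PB bnd_integrable[OF PB fx[OF that] fxb[OF that]]])
      (use fxb[OF that] in auto)
  have f2xb: "\<bar>(f (x,y))^2\<bar> \<le> Bd^2" if "x \<in> space ?A" "y \<in> space ?B" for x y
    using fxb[OF that] by (simp add: abs_le_square_iff[symmetric] B0)
  have hb: "\<bar>h x\<bar> \<le> Bd^2" if "x \<in> space ?A" for x
    unfolding h_def by (rule abs_integral_le_AE_const[OF PB bnd_integrable[OF PB _ f2xb[OF that]]])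
      (use f2xb[OF that] fx[OF that] in auto)
  have g2b: "\<bar>(g x)^2\<bar> \<le> Bd^2" if "x \<in> space ?A" for x
    using gb[OF that] by (simp add: abs_le_square_iff[symmetric] B0)
  have E1: "integral\<^sup>L (?A \<Otimes>\<^sub>M ?B) f = integral\<^sup>L ?A g"
    unfolding g_def by (rule AB.integral_fst'[symmetric]) (rule bnd_integrable[OF PAB f bnd])
  have E2: "integral\<^sup>L (?A \<Otimes>\<^sub>M ?B) (\<lambda>w. (f w)^2) = integral\<^sup>L ?A h"
    unfolding h_def by (rule AB.integral_fst'[symmetric, where f="\<lambda>w. (f w)^2", simplified])
      (rule bnd_integrable[OF PAB _ f2b], measurable)
  have ih: "integrable ?A h" by (rule bnd_integrable[OF PA hm hb])
  have ig2: "integrable ?A (\<lambda>x. (g x)^2)" by (rule bnd_integrable[OF PA _ g2b]) measurable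
  have dec: "variance_under (?A \<Otimes>\<^sub>M ?B) f = integral\<^sup>L ?A (\<lambda>x. h x - (g x)^2) + variance_under ?A g"
    unfolding variance_under_def E1 E2 using ih ig2 by (simp add: Bochner_Integration.integral_diff)
  have ae1: "AE x in ?A. h x - (g x)^2 \<le> real (card J) * c^2"
  proof (rule AE_I2)
    fix x assume x: "x \<in> space ?A"
    have "h x - (g x)^2 = variance_under ?B (\<lambda>y. f (x,y))"
      unfolding variance_under_def h_def g_def ..
    also have "\<dots> \<le> real (card J) * c^2"
      by (rule ES[OF MB fJ fx[OF x] fxb[OF x] HY[OF _ x]])
    finally show "h x - (g x)^2 \<le> real (card J) * c^2" .
  qed
  have T1: "integral\<^sup>L ?A (\<lambda>x. h x - (g x)^2) \<le> real (card J) * c^2"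
    by (rule integral_le_AE_const[OF PA _ ae1]) (use ih ig2 in auto)
  have HG: "AE w in MA a. AE x in ?A. \<bar>g x - g (x(a:=w))\<bar> \<le> c" if a: "a \<in> I" for a
    using HX[OF a]
  proof (rule AE_mp[OF _ AE_I2], intro impI)
    fix w assume w: "w \<in> space (MA a)" and ae: "AE x in ?A. AE y in ?B. \<bar>f (x,y) - f (x(a:=w),y)\<bar> \<le> c"
    show "AE x in ?A. \<bar>g x - g (x(a:=w))\<bar> \<le> c"
      using ae
    proof (rule AE_mp[OF _ AE_I2], intro impI)
      fix x assume x: "x \<in> space ?A" and ae: "AE y in ?B. \<bar>f (x,y) - f (x(a:=w),y)\<bar> \<le> c"
      have x': "x(a:=w) \<in> space ?A" using x w a by (auto simp: space_PiM PiE_iff extensional_def)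
      have "g x - g (x(a:=w)) = (\<integral>y. f (x,y) - f (x(a:=w),y) \<partial>?B)"
        unfolding g_def
        by (subst Bochner_Integration.integral_diff) (auto intro!: bnd_integrable[OF PB fx fxb] x x')
      also have "\<bar>\<dots>\<bar> \<le> c"
        by (rule abs_integral_le_AE_const[OF PB _ ae]) (auto intro!: bnd_integrable[OF PB fx fxb] x x')
      finally show "\<bar>g x - g (x(a:=w))\<bar> \<le> c" .
    qed
  qed
  have T2: "variance_under ?A g \<le> real (card I) * c^2"
    by (rule ES[OF MA fI gm gb HG])
  show ?thesis using dec T1 T2 by (simp add: algebra_simps)
qed




lemma dir_cover:
  "\<exists>U::'a::euclidean_space set. finite U \<and> (\<forall>v. norm v = 1 \<longrightarrow> (\<exists>u\<in>U. dist v u < 1/2))"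
proof -
  have "compact (sphere (0::'a) 1)" by simp
  then obtain U where U: "finite U" "sphere (0::'a) 1 \<subseteq> (\<Union>x\<in>U. ball x (1/2))"
    unfolding compact_eq_totally_bounded by (meson half_gt_zero zero_less_one)
  show ?thesis
    by (rule exI[of _ U]) (use U in \<open>fastforce simp: dist_commute\<close>)
qed

lemma cone_ineq:
  fixes a b u :: "'a::euclidean_space"
  assumes a0: "a \<noteq> 0" and b0: "b \<noteq> 0" and ab: "norm a \<le> norm b"
    and du: "dist (a /\<^sub>R norm a) u < 1/2" and dv: "dist (b /\<^sub>R norm b) u < 1/2"
  shows "norm (a - b) < norm b"
proof -
  define ua where "ua = a /\<^sub>R norm a"
  define ub where "ub = b /\<^sub>R norm b"
  have na: "norm ua = 1" and nb: "norm ub = 1" using a0 b0 by (auto simp: ua_def ub_def)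
  have "dist ua ub < 1" using du dv dist_triangle_half_l[of ua u 1 ub] unfolding ua_def ub_def
    by (simp add: dist_commute)
  have d1: "(norm (ua - ub))^2 < 1" using \<open>dist ua ub < 1\<close> by (simp add: dist_norm power_less_one_iff abs_less_iff)
  have uu: "ua \<bullet> ua = 1" "ub \<bullet> ub = 1" using na nb by (metis power2_norm_eq_inner power_one)+
  have d2: "(norm (ua - ub))^2 = 2 - 2 * (ua \<bullet> ub)"
    using uu by (simp add: power2_norm_eq_inner inner_diff algebra_simps inner_commute)
  have i: "ua \<bullet> ub > 1/2" using d1 d2 by simp
  have "a \<bullet> b = norm a * norm b * (ua \<bullet> ub)"
    using a0 b0 by (simp add: ua_def ub_def field_simps)
  then have iab: "a \<bullet> b > norm a * norm b / 2"
    using i a0 b0 by (simp add: field_simps)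
  have "(norm (a - b))^2 = (norm a)^2 - 2 * (a \<bullet> b) + (norm b)^2"
    by (simp add: power2_norm_eq_inner inner_diff algebra_simps inner_commute)
  also have "\<dots> < (norm a)^2 - norm a * norm b + (norm b)^2" using iab by simp
  also have "\<dots> \<le> (norm b)^2" using ab by (simp add: power2_eq_square mult_left_mono)
  finally show ?thesis by (simp add: power_less_imp_less_base)
qed

definition topk :: "(nat \<Rightarrow> 'a::metric_space) \<Rightarrow> nat \<Rightarrow> nat \<Rightarrow> nat \<Rightarrow> nat \<Rightarrow> bool" where
  "topk z n k i m \<longleftrightarrow> card {l. l < n \<and> l \<noteq> i \<and> closer z i l m} < k"

lemma topk_count:
  fixes z :: "nat \<Rightarrow> 'a::euclidean_space" and U :: "'a set"
  assumes U: "finite U" "\<forall>v. norm v = 1 \<longrightarrow> (\<exists>u\<in>U. dist v u < 1/2)"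
    and dist: "\<And>l. l < n \<Longrightarrow> l \<noteq> m \<Longrightarrow> z l \<noteq> z m"
  shows "card {i. i < n \<and> i \<noteq> m \<and> topk z n k i m} \<le> k * card U"
proof -
  define T where "T = {i. i < n \<and> i \<noteq> m \<and> topk z n k i m}"
  define d where "d i = (z i - z m) /\<^sub>R norm (z i - z m)" for i
  define c where "c i = (SOME u. u \<in> U \<and> dist (d i) u < 1/2)" for i
  have c: "c i \<in> U \<and> dist (d i) (c i) < 1/2" if "i \<in> T" for i
  proof -
    have "z i - z m \<noteq> 0" using that dist by (auto simp: T_def)
    then have "norm (d i) = 1" by (simp add: d_def)
    then obtain u where "u \<in> U" "dist (d i) u < 1/2" using U by blast
    then show ?thesis unfolding c_def by (metis (mono_tags, lifting) someI)
  qed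
  have fT: "finite T" by (auto simp: T_def)
  have sub: "T \<subseteq> (\<Union>u\<in>U. {i\<in>T. c i = u})" using c by blast
  have cell: "card {i\<in>T. c i = u} \<le> k" for u
  proof (cases "{i\<in>T. c i = u} = {}")
    case True then show ?thesis by (simp only: card.empty)
  next
    case False
    define S where "S = {i\<in>T. c i = u}"
    have fS: "finite S" using fT by (auto simp: S_def)
    obtain i where iS: "i \<in> S" and imax: "\<And>l. l \<in> S \<Longrightarrow> norm (z l - z m) \<le> norm (z i - z m)"
    proof -
      let ?f = "\<lambda>l. norm (z l - z m)"
      have "Max (?f ` S) \<in> ?f ` S" using fS False by (auto simp: S_def intro!: Max_in)
      then obtain i where "i \<in> S" "?f i = Max (?f ` S)" by auto
      then show ?thesis using fS by (intro that[of i]) auto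
    qed
    have "S - {i} \<subseteq> {l. l < n \<and> l \<noteq> i \<and> closer z i l m}"
    proof
      fix l assume l: "l \<in> S - {i}"
      have lT: "l \<in> T" and iT: "i \<in> T" using l iS by (auto simp: S_def)
      have a0: "z l - z m \<noteq> 0" using lT dist by (auto simp: T_def)
      have b0: "z i - z m \<noteq> 0" using iT dist by (auto simp: T_def)
      have "norm ((z l - z m) - (z i - z m)) < norm (z i - z m)"
        apply (rule cone_ineq[OF a0 b0 imax[OF DiffD1[OF l]], of u])
        using c[OF lT] c[OF iT] l iS by (auto simp: S_def d_def)
      then have "dist (z i) (z l) < dist (z i) (z m)"
        by (simp add: dist_norm norm_minus_commute)
      then show "l \<in> {l. l < n \<and> l \<noteq> i \<and> closer z i l m}"
        using lT l by (auto simp: T_def closer_def)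
    qed
    then have "card (S - {i}) \<le> card {l. l < n \<and> l \<noteq> i \<and> closer z i l m}"
      by (rule card_mono[rotated]) auto
    also have "\<dots> < k" using iS by (auto simp: S_def T_def topk_def)
    finally have "card S - 1 < k" using iS fS by simp
    then show ?thesis unfolding S_def[symmetric] by simp
  qed
  have "card T \<le> card (\<Union>u\<in>U. {i\<in>T. c i = u})" by (rule card_mono) (use U fT sub in auto)
  also have "\<dots> \<le> (\<Sum>u\<in>U. card {i\<in>T. c i = u})" by (rule card_UN_le[OF U(1)])
  also have "\<dots> \<le> (\<Sum>u\<in>U. k)" by (rule sum_mono[OF cell])
  also have "\<dots> = k * card U" by simp
  finally show ?thesis unfolding T_def .
qed

lemma closer_trans: "closer z i l m \<Longrightarrow> closer z i m j \<Longrightarrow> closer z i l j"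
  by (auto simp: closer_def)

lemma closer_irrefl: "\<not> closer z i m m"
  by (auto simp: closer_def)

lemma kth_inv:
  fixes z z' :: "nat \<Rightarrow> 'a::metric_space"
  assumes k: "1 \<le> k" and im: "i \<noteq> m" and eq: "\<And>l. l \<noteq> m \<Longrightarrow> z' l = z l"
    and t1: "\<not> topk z n k i m" and t2: "\<not> topk z' n k i m"
    and kth: "is_kth_nn z n k i j"
  shows "is_kth_nn z' n k i j"
proof -
  define S where "S zz j = {l. l < n \<and> l \<noteq> i \<and> closer zz i l j}" for zz :: "nat \<Rightarrow> 'a" and j
  have fin: "finite (S zz j)" for zz j by (auto simp: S_def)
  have jn: "j < n" "j \<noteq> i" and cj: "card (S z j) = k - 1" using kth by (auto simp: is_kth_nn_def S_def)
  have jm: "j \<noteq> m"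
  proof
    assume "j = m"
    then have "card (S z m) < k" using cj k by simp
    then show False using t1 by (simp add: topk_def S_def)
  qed
  have mS: "m \<notin> S z j"
  proof
    assume m: "m \<in> S z j"
    have "S z m \<subseteq> S z j - {m}"
    proof
      fix l assume l: "l \<in> S z m"
      have c: "closer z i m j" using m by (simp add: S_def)
      have "closer z i l m" "l < n" "l \<noteq> i" using l by (auto simp: S_def)
      then show "l \<in> S z j - {m}" using closer_trans[OF _ c] closer_irrefl[of z i m] by (auto simp: S_def)
    qed
    then have "card (S z m) \<le> card (S z j - {m})" by (intro card_mono) (auto simp: fin)
    also have "\<dots> = k - 2" using m cj fin by simp
    also have "\<dots> < k" using k by simp
    finally show False using t1 by (simp add: topk_def S_def)
  qed
  have same: "S z' j - {m} = S z j - {m}"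
    using eq im jm by (auto simp: S_def closer_def)
  have mS': "m \<notin> S z' j"
  proof
    assume m: "m \<in> S z' j"
    have "S z' m \<subseteq> S z' j - {m}"
    proof
      fix l assume l: "l \<in> S z' m"
      have c: "closer z' i m j" using m by (simp add: S_def)
      have "closer z' i l m" "l < n" "l \<noteq> i" using l by (auto simp: S_def)
      then show "l \<in> S z' j - {m}" using closer_trans[OF _ c] closer_irrefl[of z' i m] by (auto simp: S_def)
    qed
    also have "\<dots> = S z j" using same mS by auto
    finally have "card (S z' m) \<le> card (S z j)" by (intro card_mono) (auto simp: fin)
    also have "\<dots> < k" using cj k by simp
    finally show False using t2 by (simp add: topk_def S_def)
  qed
  have "S z' j = S z j" using same mS mS' by blast
  then show ?thesis using jn cj by (simp add: is_kth_nn_def S_def)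
qed

definition cc :: "(nat \<Rightarrow> 'a::metric_space) \<Rightarrow> nat \<Rightarrow> nat \<Rightarrow> nat \<Rightarrow> nat" where
  "cc z n N k = card {i. i < n \<and> (\<exists>j. is_kth_nn z n k i j \<and> ((i < N) \<noteq> (j < N)))}"

lemma cross_count_cc: "cross_count k N M xs ys = cc (pooled N xs ys) (N + M) N k"
  by (simp add: cross_count_def cc_def)

lemma cc_diff:
  fixes z :: "nat \<Rightarrow> 'a::euclidean_space" and U :: "'a set"
  assumes U: "finite U" "\<forall>v. norm v = 1 \<longrightarrow> (\<exists>u\<in>U. dist v u < 1/2)"
    and k: "1 \<le> k" and mn: "m < n"
    and d1: "\<And>l. l < n \<Longrightarrow> l \<noteq> m \<Longrightarrow> z l \<noteq> z m"
    and d2: "\<And>l. l < n \<Longrightarrow> l \<noteq> m \<Longrightarrow> z l \<noteq> w"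
  shows "\<bar>real (cc z n N k) - real (cc (z(m:=w)) n N k)\<bar> \<le> 1 + 2 * real k * real (card U)"
proof -
  define z' where "z' = z(m:=w)"
  define Q where "Q zz i = (\<exists>j. is_kth_nn zz n k i j \<and> ((i < N) \<noteq> (j < N)))" for zz :: "nat \<Rightarrow> 'a" and i
  define T where "T zz = {i. i < n \<and> i \<noteq> m \<and> topk zz n k i m}" for zz :: "nat \<Rightarrow> 'a"
  define E where "E = {m} \<union> T z \<union> T z'"
  define A where "A zz = {i. i < n \<and> Q zz i}" for zz :: "nat \<Rightarrow> 'a"
  have cT: "card (T z) \<le> k * card U" unfolding T_def by (rule topk_count[OF U(1) U(2), of n m z]) (rule d1)
  have cT': "card (T z') \<le> k * card U" unfolding T_def
    by (rule topk_count[OF U(1) U(2), of n m z']) (use d2 in \<open>auto simp: z'_def\<close>)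
  have fE: "finite E" by (auto simp: E_def T_def)
  have cE: "card E \<le> 1 + 2 * k * card U"
  proof -
    have "card E \<le> card ({m} \<union> T z) + card (T z')"
      unfolding E_def by (rule card_Un_le)
    also have "card ({m} \<union> T z) \<le> card {m} + card (T z)" by (rule card_Un_le)
    finally have "card E \<le> card {m} + card (T z) + card (T z')" by simp
    then show ?thesis using cT cT' by simp
  qed
  have eqz: "\<And>l. l \<noteq> m \<Longrightarrow> z' l = z l" by (simp add: z'_def)
  have AE: "A z - E = A z' - E"
  proof -
    have "Q z i \<longleftrightarrow> Q z' i" if "i < n" "i \<notin> E" for i
    proof -
      have im: "i \<noteq> m" and t1: "\<not> topk z n k i m" and t2: "\<not> topk z' n k i m"
        using that by (auto simp: E_def T_def)
      show ?thesis unfolding Q_def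
        using kth_inv[OF k im eqz t1 t2] kth_inv[OF k im eqz[symmetric] t2 t1] by blast
    qed
    then show ?thesis by (auto simp: A_def)
  qed
  have fA: "finite (A zz)" for zz by (auto simp: A_def)
  have b: "card (A z1) \<le> card (A z2) + card E" if "A z1 - E = A z2 - E" for z1 z2
  proof -
    have "A z1 \<subseteq> (A z1 - E) \<union> E" by blast
    then have "card (A z1) \<le> card ((A z2 - E) \<union> E)" using that fE fA by (intro card_mono) auto
    also have "\<dots> \<le> card (A z2 - E) + card E" by (rule card_Un_le)
    also have "\<dots> \<le> card (A z2) + card E" using fA by (simp add: card_mono)
    finally show ?thesis .
  qed
  have c1: "card (A z) \<le> card (A z') + card E" and c2: "card (A z') \<le> card (A z) + card E"
    using b AE by auto
  have r1: "real (card (A z)) \<le> real (card (A z')) + real (card E)"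
    using c1 by (metis of_nat_add of_nat_le_iff)
  have r2: "real (card (A z')) \<le> real (card (A z)) + real (card E)"
    using c2 by (metis of_nat_add of_nat_le_iff)
  have r3: "real (card E) \<le> 1 + 2 * real k * real (card U)"
  proof -
    have "real (card E) \<le> real (1 + 2 * k * card U)" using cE by (rule of_nat_mono)
    then show ?thesis by simp
  qed
  have e1: "cc z n N k = card (A z)" and e2: "cc (z(m:=w)) n N k = card (A z')"
    by (simp_all add: cc_def A_def Q_def z'_def)
  show ?thesis unfolding e1 e2 using r1 r2 r3 by linarith
qed




lemma density_prob:
  fixes f :: "'a::euclidean_space \<Rightarrow> real"
  assumes "prob_density f"
  shows "prob_space (density lborel (\<lambda>x. ennreal (f x)))"
proof
  have fm: "(\<lambda>x. ennreal (f x)) \<in> borel_measurable lborel" using assms by (simp add: prob_density_def)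
  show "emeasure (density lborel (\<lambda>x. ennreal (f x))) (space (density lborel (\<lambda>x. ennreal (f x)))) = 1"
    using assms by (simp add: emeasure_density[OF fm] prob_density_def)
qed

lemma density_AE_neq:
  fixes f :: "'a::euclidean_space \<Rightarrow> real"
  assumes "prob_density f"
  shows "AE u in density lborel (\<lambda>x. ennreal (f x)). u \<noteq> v"
proof -
  have fm: "(\<lambda>x. ennreal (f x)) \<in> borel_measurable lborel" using assms by (simp add: prob_density_def)
  show ?thesis unfolding AE_density[OF fm] using AE_lborel_singleton[of v] by eventually_elim auto
qed

lemma coord_borel:
  fixes \<mu> :: "'a::euclidean_space measure"
  assumes sb: "sets \<mu> = sets borel" and b: "b \<in> J"
  shows "(\<lambda>w. w b) \<in> borel_measurable (PiM J (\<lambda>_. \<mu>))"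
proof -
  have "(\<lambda>w. w b) \<in> measurable (PiM J (\<lambda>_. \<mu>)) \<mu>" by (rule measurable_component_singleton[OF b])
  moreover have "measurable (PiM J (\<lambda>_. \<mu>)) \<mu> = measurable (PiM J (\<lambda>_. \<mu>)) borel"
    by (rule measurable_cong_sets[OF refl sb])
  ultimately show ?thesis by simp
qed

lemma neq_sets:
  fixes f g :: "'b \<Rightarrow> 'a::euclidean_space"
  assumes f: "f \<in> borel_measurable M" and g: "g \<in> borel_measurable M"
  shows "{w \<in> space M. f w \<noteq> g w} \<in> sets M"
proof -
  have "(\<lambda>w. dist (f w) (g w)) \<in> borel_measurable M" using f g by (rule borel_measurable_dist)
  then have "(\<lambda>w. dist (f w) (g w)) -` {0<..} \<inter> space M \<in> sets M" by (rule measurable_sets) simp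
  also have "(\<lambda>w. dist (f w) (g w)) -` {0<..} \<inter> space M = {w \<in> space M. f w \<noteq> g w}" by auto
  finally show ?thesis .
qed
lemma PiM_AE_fix:
  fixes \<mu> :: "'a::euclidean_space measure"
  assumes P: "prob_space \<mu>" and ne: "\<And>v. AE u in \<mu>. u \<noteq> v" and sb: "sets \<mu> = sets borel"
    and fin: "finite I" and b: "b \<in> I"
  shows "AE x in PiM I (\<lambda>_. \<mu>). x b \<noteq> v"
proof -
  have I: "I = insert b (I - {b})" using b by auto
  have m: "{w \<in> space (PiM (insert b (I - {b})) (\<lambda>_. \<mu>)). w b \<noteq> v} \<in> sets (PiM (insert b (I - {b})) (\<lambda>_. \<mu>))"
    by (rule neq_sets[OF coord_borel[OF sb] borel_measurable_const]) simp
  have "AE x in PiM (I - {b}) (\<lambda>_. \<mu>). AE y in \<mu>. (x(b:=y)) b \<noteq> v"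
    using ne[of v] by simp
  then have "AE x in PiM (insert b (I - {b})) (\<lambda>_. \<mu>). x b \<noteq> v"
    by (subst AE_PiM_insert_iff[OF P]) (use fin m in auto)
  moreover have I': "insert b (I - {b}) = I" using b by auto
  ultimately show ?thesis by (simp only:)
qed

lemma PiM_AE_pair:
  fixes \<mu> :: "'a::euclidean_space measure"
  assumes P: "prob_space \<mu>" and ne: "\<And>v. AE u in \<mu>. u \<noteq> v" and sb: "sets \<mu> = sets borel"
    and fin: "finite I" and b: "b \<in> I" and b': "b' \<in> I" and bb: "b' \<noteq> b"
  shows "AE x in PiM I (\<lambda>_. \<mu>). x b \<noteq> x b'"
proof -
  have I: "I = insert b (I - {b})" using b by auto
  have m: "{w \<in> space (PiM (insert b (I - {b})) (\<lambda>_. \<mu>)). w b \<noteq> w b'} \<in> sets (PiM (insert b (I - {b})) (\<lambda>_. \<mu>))"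
    by (rule neq_sets[OF coord_borel[OF sb] coord_borel[OF sb]]) (use b' in auto)
  have "AE x in PiM (I - {b}) (\<lambda>_. \<mu>). AE y in \<mu>. (x(b:=y)) b \<noteq> (x(b:=y)) b'"
    using ne bb by simp
  then have "AE x in PiM (insert b (I - {b})) (\<lambda>_. \<mu>). x b \<noteq> x b'"
    by (subst AE_PiM_insert_iff[OF P]) (use fin m in auto)
  moreover have I': "insert b (I - {b}) = I" using b by auto
  ultimately show ?thesis by (simp only:)
qed

lemma card_sum: fixes n :: nat shows "real (card {l. l < n \<and> P l}) = (\<Sum>l<n. if P l then 1 else 0)"
proof -
  have "(\<Sum>l<n. if P l then 1 else 0 :: real) = sum (\<lambda>_. 1) {l \<in> {..<n}. P l}"
    by (rule sum.inter_filter[symmetric]) simp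
  also have "{l \<in> {..<n}. P l} = {l. l < n \<and> P l}" by auto
  finally show ?thesis by simp
qed

lemma cc_meas:
  fixes Z :: "'w \<Rightarrow> nat \<Rightarrow> 'a::euclidean_space"
  assumes Zm[measurable]: "\<And>i. (\<lambda>\<omega>. Z \<omega> i) \<in> borel_measurable M"
  shows "(\<lambda>\<omega>. real (cc (Z \<omega>) n N k)) \<in> borel_measurable M"
proof -
  have e1: "is_kth_nn (Z \<omega>) n k i j \<longleftrightarrow> j < n \<and> j \<noteq> i \<and>
     (\<Sum>l<n. if l \<noteq> i \<and> (dist (Z \<omega> i) (Z \<omega> l) < dist (Z \<omega> i) (Z \<omega> j)
        \<or> (dist (Z \<omega> i) (Z \<omega> l) = dist (Z \<omega> i) (Z \<omega> j) \<and> l < j)) then 1 else 0) = real (k - 1)" for \<omega> i j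
  proof -
    have "card {l. l < n \<and> l \<noteq> i \<and> closer (Z \<omega>) i l j} = k - 1 \<longleftrightarrow>
       real (card {l. l < n \<and> (l \<noteq> i \<and> closer (Z \<omega>) i l j)}) = real (k - 1)" by simp
    also have "\<dots> \<longleftrightarrow> (\<Sum>l<n. if l \<noteq> i \<and> closer (Z \<omega>) i l j then 1 else 0) = real (k - 1)"
      by (subst card_sum) simp
    finally show ?thesis by (simp add: is_kth_nn_def closer_def)
  qed
  have e2: "real (cc (Z \<omega>) n N k) = (\<Sum>i<n. if (\<exists>j\<in>{..<n}. is_kth_nn (Z \<omega>) n k i j \<and> ((i < N) \<noteq> (j < N))) then 1 else 0)" for \<omega>
  proof -
    have "cc (Z \<omega>) n N k = card {i. i < n \<and> (\<exists>j\<in>{..<n}. is_kth_nn (Z \<omega>) n k i j \<and> ((i < N) \<noteq> (j < N)))}"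
      unfolding cc_def by (rule arg_cong[where f=card]) (auto simp: is_kth_nn_def)
    then show ?thesis by (simp add: card_sum)
  qed
  show ?thesis unfolding e2 e1 by measurable
qed




lemma coord_borel_all:
  fixes \<mu> :: "'a::euclidean_space measure"
  assumes sb: "sets \<mu> = sets borel"
  shows "(\<lambda>w. w j) \<in> borel_measurable (PiM J (\<lambda>_. \<mu>))"
proof (cases "j \<in> J")
  case True then show ?thesis by (rule coord_borel[OF sb])
next
  case False
  have "(\<lambda>w. w j) \<in> borel_measurable (PiM J (\<lambda>_. \<mu>)) \<longleftrightarrow> (\<lambda>w. undefined) \<in> borel_measurable (PiM J (\<lambda>_. \<mu>))"
    using Sigma_Algebra.measurable_cong[of "PiM J (\<lambda>_. \<mu>)" "\<lambda>w. w j" "\<lambda>w. undefined" borel] False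
    by (auto simp: space_PiM PiE_def extensional_def)
  then show ?thesis by simp
qed

lemma pooled_upd_x: "a < N \<Longrightarrow> pooled N (xs(a:=w)) ys = (pooled N xs ys)(a:=w)"
  by (auto simp: pooled_def fun_eq_iff)

lemma pooled_upd_y: "pooled N xs (ys(b:=w)) = (pooled N xs ys)(N+b:=w)"
  by (auto simp: pooled_def fun_eq_iff)

lemma Dp_diff:
  assumes "\<bar>real (cross_count k N M xs ys) - real (cross_count k N M xs' ys')\<bar> \<le> C"
  shows "\<bar>Dp_hat k N M xs ys - Dp_hat k N M xs' ys'\<bar> \<le> C * (real (N+M) / (2 * real N * real M))"
proof -
  define R where "R = real (N+M) / (2 * real N * real M)"
  have R0: "0 \<le> R" unfolding R_def by simp
  have "Dp_hat k N M xs ys - Dp_hat k N M xs' ys' =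
     (real (cross_count k N M xs' ys') - real (cross_count k N M xs ys)) * R"
    unfolding Dp_hat_def R_def by (simp add: algebra_simps diff_divide_distrib)
  then have "\<bar>Dp_hat k N M xs ys - Dp_hat k N M xs' ys'\<bar> =
     \<bar>real (cross_count k N M xs ys) - real (cross_count k N M xs' ys')\<bar> * R"
    using R0 by (simp add: abs_mult abs_minus_commute)
  also have "\<dots> \<le> C * R" by (rule mult_right_mono[OF assms R0])
  finally show ?thesis unfolding R_def .
qed

lemma cross_count_le: "cross_count k N M xs ys \<le> N + M"
proof -
  have "cross_count k N M xs ys \<le> card {..<N+M}"
    unfolding cross_count_def by (rule card_mono) auto
  then show ?thesis by simp
qed

lemma var_bound:
  fixes fX fY :: "'a::euclidean_space \<Rightarrow> real" and U :: "'a set"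
  assumes dX: "prob_density fX" and dY: "prob_density fY" and k: "1 \<le> k"
    and U: "finite U" "\<forall>v. norm v = 1 \<longrightarrow> (\<exists>u\<in>U. dist v u < 1/2)"
  shows "variance_under (sample_measure N M fX fY) (\<lambda>(xs, ys). Dp_hat k N M xs ys)
           \<le> (real N + real M) * ((1 + 2 * real k * real (card U)) * (real (N+M) / (2 * real N * real M)))^2"
    and "0 \<le> variance_under (sample_measure N M fX fY) (\<lambda>(xs, ys). Dp_hat k N M xs ys)"
proof -
  define \<mu>X where "\<mu>X = density lborel (\<lambda>x. ennreal (fX x))"
  define \<mu>Y where "\<mu>Y = density lborel (\<lambda>x. ennreal (fY x))"
  define R where "R = real (N+M) / (2 * real N * real M)"
  define C where "C = 1 + 2 * real k * real (card U)"
  define c where "c = C * R"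
  let ?A = "PiM {..<N} (\<lambda>_. \<mu>X)" and ?B = "PiM {..<M} (\<lambda>_. \<mu>Y)"
  have PX: "prob_space \<mu>X" unfolding \<mu>X_def by (rule density_prob[OF dX])
  have PY: "prob_space \<mu>Y" unfolding \<mu>Y_def by (rule density_prob[OF dY])
  have neX: "\<And>v. AE u in \<mu>X. u \<noteq> v" unfolding \<mu>X_def by (rule density_AE_neq[OF dX])
  have neY: "\<And>v. AE u in \<mu>Y. u \<noteq> v" unfolding \<mu>Y_def by (rule density_AE_neq[OF dY])
  have sX: "sets \<mu>X = sets borel" and sY: "sets \<mu>Y = sets borel" by (simp_all add: \<mu>X_def \<mu>Y_def)
  have SM: "sample_measure N M fX fY = ?A \<Otimes>\<^sub>M ?B" by (simp add: sample_measure_def \<mu>X_def \<mu>Y_def)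
  have Zm[measurable]: "(\<lambda>\<omega>. pooled N (fst \<omega>) (snd \<omega>) i) \<in> borel_measurable (?A \<Otimes>\<^sub>M ?B)" for i
  proof (cases "i < N")
    case True
    have "(\<lambda>\<omega>. fst \<omega> i) \<in> borel_measurable (?A \<Otimes>\<^sub>M ?B)"
      using measurable_compose[OF measurable_fst coord_borel_all[OF sX, of i "{..<N}"]] .
    then show ?thesis using True by (simp add: pooled_def)
  next
    case False
    have "(\<lambda>\<omega>. snd \<omega> (i - N)) \<in> borel_measurable (?A \<Otimes>\<^sub>M ?B)"
      using measurable_compose[OF measurable_snd coord_borel_all[OF sY, of "i - N" "{..<M}"]] .
    then show ?thesis using False by (simp add: pooled_def)
  qed
  have ccm[measurable]: "(\<lambda>\<omega>. real (cc (pooled N (fst \<omega>) (snd \<omega>)) (N+M) N k)) \<in> borel_measurable (?A \<Otimes>\<^sub>M ?B)"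
    by (rule cc_meas[OF Zm])
  have feq: "(\<lambda>(xs, ys). Dp_hat k N M xs ys) = (\<lambda>\<omega>. 1 - real (cc (pooled N (fst \<omega>) (snd \<omega>)) (N+M) N k) * R)"
    by (auto simp: Dp_hat_def cross_count_cc R_def fun_eq_iff)
  have fm: "(\<lambda>(xs, ys). Dp_hat k N M xs ys) \<in> borel_measurable (?A \<Otimes>\<^sub>M ?B)"
    unfolding feq by measurable
  have R0: "0 \<le> R" by (simp add: R_def)
  have fb: "\<bar>(\<lambda>(xs, ys). Dp_hat k N M xs ys) w\<bar> \<le> 1 + real (N+M) * R" for w
  proof -
    obtain xs ys where w: "w = (xs, ys)" by fastforce
    have "real (cross_count k N M xs ys) * R \<le> real (N+M) * R"
      using cross_count_le[of k N M xs ys] R0 by (intro mult_right_mono) auto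
    moreover have "0 \<le> real (cross_count k N M xs ys) * R" using R0 by simp
    moreover have "Dp_hat k N M xs ys = 1 - real (cross_count k N M xs ys) * R"
      by (simp add: Dp_hat_def R_def)
    ultimately show ?thesis unfolding w by simp
  qed
  have HX: "AE w in \<mu>X. AE xs in ?A. AE ys in ?B. \<bar>Dp_hat k N M xs ys - Dp_hat k N M (xs(a:=w)) ys\<bar> \<le> c"
    if a: "a \<in> {..<N}" for a
  proof (rule AE_I2)
    fix w
    have D1: "AE xs in ?A. \<forall>a'\<in>{..<N}-{a}. xs a \<noteq> xs a'"
      by (rule AE_finite_allI) (auto intro!: PiM_AE_pair[OF PX neX sX] a)
    have D2: "AE xs in ?A. \<forall>a'\<in>{..<N}-{a}. xs a' \<noteq> w"
      by (rule AE_finite_allI) (auto intro!: PiM_AE_fix[OF PX neX sX])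
    from D1 D2 show "AE xs in ?A. AE ys in ?B. \<bar>Dp_hat k N M xs ys - Dp_hat k N M (xs(a:=w)) ys\<bar> \<le> c"
    proof eventually_elim
      fix xs assume d1: "\<forall>a'\<in>{..<N}-{a}. xs a \<noteq> xs a'" and d2: "\<forall>a'\<in>{..<N}-{a}. xs a' \<noteq> w"
      have D3: "AE ys in ?B. \<forall>b\<in>{..<M}. ys b \<noteq> xs a"
        by (rule AE_finite_allI) (auto intro!: PiM_AE_fix[OF PY neY sY])
      have D4: "AE ys in ?B. \<forall>b\<in>{..<M}. ys b \<noteq> w"
        by (rule AE_finite_allI) (auto intro!: PiM_AE_fix[OF PY neY sY])
      from D3 D4 show "AE ys in ?B. \<bar>Dp_hat k N M xs ys - Dp_hat k N M (xs(a:=w)) ys\<bar> \<le> c"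
      proof eventually_elim
        fix ys assume d3: "\<forall>b\<in>{..<M}. ys b \<noteq> xs a" and d4: "\<forall>b\<in>{..<M}. ys b \<noteq> w"
        define z where "z = pooled N xs ys"
        have am: "a < N + M" using a by simp
        have e1: "\<And>l. l < N + M \<Longrightarrow> l \<noteq> a \<Longrightarrow> z l \<noteq> z a"
          using d1 d3 a by (auto simp: z_def pooled_def) (metis DiffI lessThan_iff singletonD)
        have e2: "\<And>l. l < N + M \<Longrightarrow> l \<noteq> a \<Longrightarrow> z l \<noteq> w"
          using d2 d4 a by (auto simp: z_def pooled_def)
        have "\<bar>real (cc z (N+M) N k) - real (cc (z(a:=w)) (N+M) N k)\<bar> \<le> C"
          unfolding C_def by (rule cc_diff[OF U(1) U(2) k am, of z w N]) (use e1 e2 in auto)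
        then have "\<bar>real (cross_count k N M xs ys) - real (cross_count k N M (xs(a:=w)) ys)\<bar> \<le> C"
          using a by (simp add: cross_count_cc pooled_upd_x z_def)
        from Dp_diff[OF this] show "\<bar>Dp_hat k N M xs ys - Dp_hat k N M (xs(a:=w)) ys\<bar> \<le> c"
          by (simp add: c_def R_def)
      qed
    qed
  qed
  have HY: "AE w in \<mu>Y. AE ys in ?B. \<bar>Dp_hat k N M xs ys - Dp_hat k N M xs (ys(b:=w))\<bar> \<le> c"
    if b: "b \<in> {..<M}" for b xs
  proof -
    have D0: "AE w in \<mu>Y. \<forall>a\<in>{..<N}. w \<noteq> xs a"
      by (rule AE_finite_allI) (auto intro!: neY)
    then show ?thesis
    proof eventually_elim
      fix w assume d0: "\<forall>a\<in>{..<N}. w \<noteq> xs a"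
      have D1: "AE ys in ?B. \<forall>b'\<in>{..<M}-{b}. ys b \<noteq> ys b'"
        by (rule AE_finite_allI) (auto intro!: PiM_AE_pair[OF PY neY sY] b)
      have D2: "AE ys in ?B. \<forall>b'\<in>{..<M}-{b}. ys b' \<noteq> w"
        by (rule AE_finite_allI) (auto intro!: PiM_AE_fix[OF PY neY sY])
      have D3: "AE ys in ?B. \<forall>a\<in>{..<N}. ys b \<noteq> xs a"
        by (rule AE_finite_allI) (auto intro!: PiM_AE_fix[OF PY neY sY] b)
      from D1 D2 D3 show "AE ys in ?B. \<bar>Dp_hat k N M xs ys - Dp_hat k N M xs (ys(b:=w))\<bar> \<le> c"
      proof eventually_elim
        fix ys assume d1: "\<forall>b'\<in>{..<M}-{b}. ys b \<noteq> ys b'" and d2: "\<forall>b'\<in>{..<M}-{b}. ys b' \<noteq> w"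
          and d3: "\<forall>a\<in>{..<N}. ys b \<noteq> xs a"
        define z where "z = pooled N xs ys"
        have bm: "N + b < N + M" using b by simp
        have e1: "\<And>l. l < N + M \<Longrightarrow> l \<noteq> N + b \<Longrightarrow> z l \<noteq> z (N + b)"
        proof -
          fix l assume l: "l < N + M" "l \<noteq> N + b"
          show "z l \<noteq> z (N + b)"
          proof (cases "l < N")
            case True then show ?thesis using d3 by (auto simp: z_def pooled_def) (metis lessThan_iff)
          next
            case False
            then have "l - N \<in> {..<M} - {b}" using l by auto
            then show ?thesis using d1 False by (auto simp: z_def pooled_def) (metis DiffI lessThan_iff singletonD)
          qed
        qed
        have e2: "\<And>l. l < N + M \<Longrightarrow> l \<noteq> N + b \<Longrightarrow> z l \<noteq> w"
        proof -
          fix l assume l: "l < N + M" "l \<noteq> N + b"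
          show "z l \<noteq> w"
          proof (cases "l < N")
            case True then show ?thesis using d0 by (auto simp: z_def pooled_def)
          next
            case False
            then have "l - N \<in> {..<M} - {b}" using l by auto
            then show ?thesis using d2 False by (auto simp: z_def pooled_def)
          qed
        qed
        have "\<bar>real (cc z (N+M) N k) - real (cc (z(N+b:=w)) (N+M) N k)\<bar> \<le> C"
          unfolding C_def by (rule cc_diff[OF U(1) U(2) k bm, of z w N]) (use e1 e2 in auto)
        then have "\<bar>real (cross_count k N M xs ys) - real (cross_count k N M xs (ys(b:=w)))\<bar> \<le> C"
          by (simp add: cross_count_cc pooled_upd_y z_def)
        from Dp_diff[OF this] show "\<bar>Dp_hat k N M xs ys - Dp_hat k N M xs (ys(b:=w))\<bar> \<le> c"
          by (simp add: c_def R_def)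
      qed
    qed
  qed
  have "variance_under (?A \<Otimes>\<^sub>M ?B) (\<lambda>(xs, ys). Dp_hat k N M xs ys) \<le> (real (card {..<N}) + real (card {..<M})) * c^2"
    by (rule ES2[OF _ _ _ _ fm fb]) (use PX PY HX HY in auto)
  then show "variance_under (sample_measure N M fX fY) (\<lambda>(xs, ys). Dp_hat k N M xs ys)
           \<le> (real N + real M) * ((1 + 2 * real k * real (card U)) * (real (N+M) / (2 * real N * real M)))^2"
    unfolding SM by (simp add: c_def C_def R_def)
  have PAB: "prob_space (?A \<Otimes>\<^sub>M ?B)"
    by (intro prob_space_pair prob_space_PiM PX PY)
  show "0 \<le> variance_under (sample_measure N M fX fY) (\<lambda>(xs, ys). Dp_hat k N M xs ys)"
    unfolding SM by (rule var_nonneg[OF PAB fm fb])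
qed




lemma asym_ineq:
  fixes x y r K :: real
  assumes x: "0 < x" and r: "0 < r" and y1: "x * r / 2 \<le> y" and y2: "y \<le> x * r"
  shows "(x + y) * (K * ((x + y) / (2 * x * y)))^2 \<le> K^2 * (1 + r)^3 / r^2 * (1 / x)"
proof -
  have y: "0 < y" using y1 x r by (smt (verit) mult_pos_pos half_gt_zero)
  have e1: "(x + y) * (K * ((x + y) / (2 * x * y)))^2 = K^2 * ((x + y)^3 / (4 * x^2 * y^2))"
    using x y by (simp add: power2_eq_square power3_eq_cube field_simps)
  have "(x + y)^3 / (4 * x^2 * y^2) \<le> (x * (1 + r))^3 / (x^2 * (x * r)^2)"
  proof (rule frac_le)
    show "0 \<le> (x * (1 + r))^3" using x r by simp
    show "(x + y)^3 \<le> (x * (1 + r))^3" using x y y2 by (intro power_mono) (auto simp: algebra_simps)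
    show "0 < x^2 * (x * r)^2" using x r by simp
    have "(x * r)^2 \<le> (2 * y)^2" using x r y1 by (intro power_mono) auto
    then have "x^2 * (x * r)^2 \<le> x^2 * (2 * y)^2" by (rule mult_left_mono) simp
    also have "x^2 * (2 * y)^2 = 4 * x^2 * y^2" by (simp add: power_mult_distrib)
    finally show "x^2 * (x * r)^2 \<le> 4 * x^2 * y^2" .
  qed
  also have "(x * (1 + r))^3 / (x^2 * (x * r)^2) = (1 + r)^3 / r^2 * (1 / x)"
    using x r by (simp add: power2_eq_square power3_eq_cube field_simps)
  finally have "(x + y)^3 / (4 * x^2 * y^2) \<le> (1 + r)^3 / r^2 * (1 / x)" .
  then have "K^2 * ((x + y)^3 / (4 * x^2 * y^2)) \<le> K^2 * ((1 + r)^3 / r^2 * (1 / x))"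
    by (rule mult_left_mono) simp
  then show ?thesis unfolding e1 by simp
qed

theorem theorem2:
  fixes fX fY :: "'a::euclidean_space \<Rightarrow> real"
    and S :: "'a set" and p \<gamma> CL CU L :: real and k :: nat
  assumes "0 < p" "p < 1"
    and "1 \<le> k"
    and "prob_density fX" "prob_density fY"
    and "bounded S"
    and "0 < CL" "CL \<le> CU"
    and "\<And>x. x \<notin> S \<Longrightarrow> fX x = 0" "\<And>x. x \<notin> S \<Longrightarrow> fY x = 0"
    and "\<And>x. x \<in> S \<Longrightarrow> CL \<le> fX x \<and> fX x \<le> CU"
    and "\<And>x. x \<in> S \<Longrightarrow> CL \<le> fY x \<and> fY x \<le> CU"
    and "0 < \<gamma>" "\<gamma> \<le> 1"
    and "\<And>x y. x \<in> S \<Longrightarrow> y \<in> S \<Longrightarrow> \<bar>fX x - fX y\<bar> \<le> L * dist x y powr \<gamma>"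
    and "\<And>x y. x \<in> S \<Longrightarrow> y \<in> S \<Longrightarrow> \<bar>fY x - fY y\<bar> \<le> L * dist x y powr \<gamma>"
  shows "(\<lambda>N::nat. let M = nat \<lfloor>real N * (1 - p) / p\<rfloor> in
            variance_under (sample_measure N M fX fY) (\<lambda>(xs, ys). Dp_hat k N M xs ys))
         \<in> O(\<lambda>N. 1 / real N)"
proof -
  obtain U :: "'a set" where U: "finite U" "\<forall>v. norm v = 1 \<longrightarrow> (\<exists>u\<in>U. dist v u < 1/2)"
    using dir_cover by blast
  define r where "r = (1 - p) / p"
  have r: "0 < r" using assms(1,2) by (simp add: r_def)
  define K where "K = 1 + 2 * real k * real (card U)"
  define Cst where "Cst = K^2 * (1 + r)^3 / r^2"
  define N0 where "N0 = nat \<lceil>2 / r\<rceil> + 1"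
  show ?thesis
  proof (rule bigoI[where c = Cst])
    show "\<forall>\<^sub>F N in at_top. norm (let M = nat \<lfloor>real N * (1 - p) / p\<rfloor> in
            variance_under (sample_measure N M fX fY) (\<lambda>(xs, ys). Dp_hat k N M xs ys))
          \<le> Cst * norm (1 / real N)"
      unfolding eventually_at_top_linorder
    proof (intro exI[of _ N0] allI impI)
      fix N :: nat assume N: "N0 \<le> N"
      define M where "M = nat \<lfloor>real N * (1 - p) / p\<rfloor>"
      have Nr: "real N * (1 - p) / p = real N * r" by (simp add: r_def)
      have N1: "2 / r \<le> real N" using N unfolding N0_def by linarith
      have Npos: "0 < real N" using N unfolding N0_def by simp
      have Nr2: "2 \<le> real N * r" using N1 r by (simp add: field_simps)
      have fl: "real N * r - 1 < of_int \<lfloor>real N * r\<rfloor>" "of_int \<lfloor>real N * r\<rfloor> \<le> real N * r"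
        by linarith+
      have Mr: "real M = of_int \<lfloor>real N * r\<rfloor>" unfolding M_def Nr using Nr2 by simp
      have y1: "real N * r / 2 \<le> real M" using fl Mr Nr2 by linarith
      have y2: "real M \<le> real N * r" using fl Mr by linarith
      have vb: "variance_under (sample_measure N M fX fY) (\<lambda>(xs, ys). Dp_hat k N M xs ys)
           \<le> (real N + real M) * (K * ((real N + real M) / (2 * real N * real M)))^2"
        using var_bound(1)[OF assms(4,5,3) U, of N M] by (simp add: K_def)
      have v0: "0 \<le> variance_under (sample_measure N M fX fY) (\<lambda>(xs, ys). Dp_hat k N M xs ys)"
        by (rule var_bound(2)[OF assms(4,5,3) U])
      have "(real N + real M) * (K * ((real N + real M) / (2 * real N * real M)))^2 \<le> Cst * (1 / real N)"
        unfolding Cst_def by (rule asym_ineq[OF Npos r y1 y2])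
      then show "norm (let M = nat \<lfloor>real N * (1 - p) / p\<rfloor> in
            variance_under (sample_measure N M fX fY) (\<lambda>(xs, ys). Dp_hat k N M xs ys))
          \<le> Cst * norm (1 / real N)"
        using vb v0 Npos unfolding M_def[symmetric] Let_def by simp
    qed
  qed
qed


end
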